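(* For every class of graphs $\mathcal{G}$, $\operatorname{rtw}(\widehat{\mathcal{G}})\leq \max(\operatorname{rtw}(\mathcal{G}),1)$.
   Context: A class of graphs is a collection of graphs closed under isomorphism. For a class $\mathcal{G}$, $\widehat{\mathcal{G}}$ denotes the class of graphs $G$ for which there exists a set $Z\subseteq V(G)$ of vertices each of degree exactly $1$ in $G$ such that $G-Z\in\mathcal{G}$. The strong product $H\boxtimes P$ has vertex set $V(H)\times V(P)$, distinct pairs adjacent if adjacent or equal in each coordinate. The row treewidth $\operatorname{rtw}(G)$ of a graph $G$ is the minimum $b$ such that there is a graph $H$ with treewidth at most $b$ and a path $P$ with $G$ isomorphic to a subgraph of $H\boxtimes P$. The row treewidth $\operatorname{rtw}(\mathcal{G})$ of a class is the maximum row treewidth of a graph in $\mathcal{G}$, or $\infty$ if no maximum exists. *)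

theory Defs
  imports Main "HOL-Library.Extended_Nat"
begin

text \<open>A (finite, simple, undirected) graph: vertex set and set of 2-element edges.\<close>
type_synonym 'a graph = "'a set \<times> 'a set set"

definition verts :: "'a graph \<Rightarrow> 'a set" where "verts G = fst G"
definition edges :: "'a graph \<Rightarrow> 'a set set" where "edges G = snd G"

definition is_graph :: "'a graph \<Rightarrow> bool" where
  "is_graph G \<longleftrightarrow> finite (verts G) \<and> (\<forall>e\<in>edges G. card e = 2 \<and> e \<subseteq> verts G)"

definition degree :: "'a graph \<Rightarrow> 'a \<Rightarrow> nat" where
  "degree G v = card {e \<in> edges G. v \<in> e}"

definition delete_verts :: "'a graph \<Rightarrow> 'a set \<Rightarrow> 'a graph" where
  "delete_verts G Z = (verts G - Z, {e \<in> edges G. e \<inter> Z = {}})"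

definition induced :: "'a graph \<Rightarrow> 'a set \<Rightarrow> 'a graph" where
  "induced G S = (S \<inter> verts G, {e \<in> edges G. e \<subseteq> S})"

definition connected_graph :: "'a graph \<Rightarrow> bool" where
  "connected_graph G \<longleftrightarrow>
     (\<forall>u\<in>verts G. \<forall>v\<in>verts G. (u, v) \<in> {(x, y). {x, y} \<in> edges G}\<^sup>*)"

definition is_tree :: "'a graph \<Rightarrow> bool" where
  "is_tree T \<longleftrightarrow> is_graph T \<and> verts T \<noteq> {} \<and> connected_graph T
                 \<and> card (edges T) = card (verts T) - 1"

definition tree_decomp :: "'a graph \<Rightarrow> nat graph \<Rightarrow> (nat \<Rightarrow> 'a set) \<Rightarrow> bool" where
  "tree_decomp G T B \<longleftrightarrow> is_tree T
     \<and> (\<forall>t\<in>verts T. B t \<subseteq> verts G)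
     \<and> (\<forall>v\<in>verts G. \<exists>t\<in>verts T. v \<in> B t)
     \<and> (\<forall>e\<in>edges G. \<exists>t\<in>verts T. e \<subseteq> B t)
     \<and> (\<forall>v\<in>verts G. connected_graph (induced T {t \<in> verts T. v \<in> B t}))"

definition decomp_width :: "nat graph \<Rightarrow> (nat \<Rightarrow> 'a set) \<Rightarrow> nat" where
  "decomp_width T B = Max ((\<lambda>t. card (B t)) ` verts T) - 1"

definition treewidth :: "'a graph \<Rightarrow> nat" where
  "treewidth G = (LEAST k. \<exists>T B. tree_decomp G T B \<and> decomp_width T B = k)"

definition strong_product :: "'a graph \<Rightarrow> 'b graph \<Rightarrow> ('a \<times> 'b) graph" where
  "strong_product H P = (verts H \<times> verts P,
     {{(a, b), (c, d)} | a b c d. a \<in> verts H \<and> c \<in> verts H \<and> b \<in> verts P \<and> d \<in> verts P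
        \<and> (a, b) \<noteq> (c, d) \<and> (a = c \<or> {a, c} \<in> edges H) \<and> (b = d \<or> {b, d} \<in> edges P)})"

text \<open>The path on n vertices 0,...,n-1 (every path is isomorphic to one of these).\<close>
definition path_graph :: "nat \<Rightarrow> nat graph" where
  "path_graph n = ({0..<n}, {{i, Suc i} | i. Suc i < n})"

text \<open>G is isomorphic to a (not necessarily induced) subgraph of K.\<close>
definition subgraph_iso :: "'a graph \<Rightarrow> 'b graph \<Rightarrow> bool" where
  "subgraph_iso G K \<longleftrightarrow> (\<exists>f. inj_on f (verts G) \<and> f ` verts G \<subseteq> verts K
      \<and> (\<forall>e\<in>edges G. f ` e \<in> edges K))"

definition graph_iso :: "'a graph \<Rightarrow> 'b graph \<Rightarrow> bool" where
  "graph_iso G K \<longleftrightarrow> (\<exists>f. bij_betw f (verts G) (verts K)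
      \<and> (\<forall>e. e \<subseteq> verts G \<longrightarrow> (e \<in> edges G \<longleftrightarrow> f ` e \<in> edges K)))"

definition row_treewidth :: "'a graph \<Rightarrow> nat" where
  "row_treewidth G = (LEAST b. \<exists>(H :: nat graph) n. is_graph H \<and> treewidth H \<le> b
       \<and> subgraph_iso G (strong_product H (path_graph n)))"

text \<open>A class of graphs: a set of finite graphs (vertices in nat, which is no loss since
  every finite graph is isomorphic to one on nat) closed under isomorphism.\<close>
definition graph_class :: "nat graph set \<Rightarrow> bool" where
  "graph_class C \<longleftrightarrow> (\<forall>G\<in>C. is_graph G)
     \<and> (\<forall>G\<in>C. \<forall>G'. is_graph G' \<and> graph_iso G G' \<longrightarrow> G' \<in> C)"

definition pendant_ext :: "nat graph set \<Rightarrow> nat graph set" where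
  "pendant_ext C = {G. is_graph G \<and> (\<exists>Z \<subseteq> verts G. (\<forall>z\<in>Z. degree G z = 1)
        \<and> delete_verts G Z \<in> C)}"

definition rtw_class :: "nat graph set \<Rightarrow> enat" where
  "rtw_class C = (if \<exists>G\<in>C. \<forall>G'\<in>C. row_treewidth G' \<le> row_treewidth G
     then enat (Max (row_treewidth ` C)) else \<infinity>)"

end

theory Submission
  imports Defs
begin

lemma verts_pair[simp]: "verts (V,E) = V" by (simp add: verts_def)
lemma edges_pair[simp]: "edges (V,E) = E" by (simp add: edges_def)

lemma graph_edges_finite: "is_graph G \<Longrightarrow> finite (edges G)"
  unfolding is_graph_def by (meson Pow_iff finite_Pow_iff finite_subset subsetI)

lemma rel_mono: "E \<subseteq> E' \<Longrightarrow> (u,v) \<in> {(x,y). {x,y}\<in>E}\<^sup>* \<Longrightarrow> (u,v) \<in> {(x,y). {x,y}\<in>E'}\<^sup>*"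
  by (rule rtrancl_mono[THEN subsetD]) auto

lemma conn_single: "verts G \<subseteq> {a} \<Longrightarrow> connected_graph G"
  unfolding connected_graph_def by auto

lemma tw_exists:
  assumes "is_graph H"
  shows "\<exists>T B. tree_decomp H T B \<and> decomp_width T B = treewidth H"
proof -
  have "tree_decomp H ({0::nat}, {}) (\<lambda>_. verts H)"
    using assms unfolding tree_decomp_def is_tree_def is_graph_def connected_graph_def induced_def
    by auto
  then have "\<exists>k T B. tree_decomp H T B \<and> decomp_width T B = k" by blast
  then show ?thesis unfolding treewidth_def by (rule LeastI_ex)
qed

lemma ext_tree:
  assumes T: "is_tree T" and ht: "t \<in> verts T" and t': "t' \<notin> verts T"
  shows "is_tree (insert t' (verts T), insert {t,t'} (edges T))"
proof -
  have g: "is_graph T" and fin: "finite (verts T)" and ne: "verts T \<noteq> {}"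
    and con: "connected_graph T" and c: "card (edges T) = card (verts T) - 1"
    using T unfolding is_tree_def is_graph_def by auto
  have tt: "t \<noteq> t'" using ht t' by auto
  have fe: "finite (edges T)" using graph_edges_finite[OF g] .
  have nin: "{t,t'} \<notin> edges T" using g t' unfolding is_graph_def by auto
  let ?E = "insert {t,t'} (edges T)"
  let ?R = "{(x,y). {x,y}\<in>?E}"
  have e1: "(t,t') \<in> ?R\<^sup>*" "(t',t) \<in> ?R\<^sup>*" by (auto simp: insert_commute)
  have old: "(u,v) \<in> ?R\<^sup>*" if "u \<in> verts T" "v \<in> verts T" for u v
  proof -
    have "(u,v) \<in> {(x,y). {x,y}\<in>edges T}\<^sup>*" using con that unfolding connected_graph_def by auto
    then show ?thesis by (rule rel_mono[rotated]) auto
  qed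
  have conn: "(u,v) \<in> ?R\<^sup>*" if "u \<in> insert t' (verts T)" "v \<in> insert t' (verts T)" for u v
  proof -
    have a: "(u,t) \<in> ?R\<^sup>*" using that(1) old[OF _ ht] e1 by auto
    have b: "(t,v) \<in> ?R\<^sup>*" using that(2) old[OF ht] e1 by auto
    show ?thesis using a b by (rule rtrancl_trans)
  qed
  have cardE: "card (edges T) + 1 = card (verts T)"
    using c fin ne by (metis One_nat_def Suc_pred card_gt_0_iff add.commute plus_1_eq_Suc)
  show ?thesis
    unfolding is_tree_def is_graph_def connected_graph_def
    using g fin tt fe nin ht cardE t' conn unfolding is_graph_def
    by (auto simp: card_insert_if)
qed

lemma ext_decomp:
  assumes td: "tree_decomp H T B" and hx: "x \<notin> verts H" and ht: "t \<in> verts T"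
    and t': "t' \<notin> verts T" and S: "x \<in> S" "S \<subseteq> insert x (B t)"
    and E': "\<forall>e\<in>E'. e \<subseteq> S"
  shows "tree_decomp (insert x (verts H), edges H \<union> E')
           (insert t' (verts T), insert {t,t'} (edges T)) (B(t' := S))"
proof -
  have T: "is_tree T" and bs: "\<forall>s\<in>verts T. B s \<subseteq> verts H"
    and cov: "\<forall>v\<in>verts H. \<exists>s\<in>verts T. v \<in> B s"
    and ce: "\<forall>e\<in>edges H. \<exists>s\<in>verts T. e \<subseteq> B s"
    and cc: "\<forall>v\<in>verts H. connected_graph (induced T {s \<in> verts T. v \<in> B s})"
    using td unfolding tree_decomp_def by auto
  have gT: "is_graph T" using T unfolding is_tree_def by auto
  let ?B = "B(t' := S)"
  let ?V = "insert t' (verts T)"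
  let ?E = "insert {t,t'} (edges T)"
  have sub: "connected_graph (induced (?V,?E) {s \<in> ?V. v \<in> ?B s})"
    if v: "v \<in> insert x (verts H)" for v
  proof (cases "v = x")
    case True
    then have "{s \<in> ?V. v \<in> ?B s} \<subseteq> {t'}" using bs hx S by auto
    then have "verts (induced (?V,?E) {s \<in> ?V. v \<in> ?B s}) \<subseteq> {t'}"
      unfolding induced_def by auto
    then show ?thesis by (rule conn_single)
  next
    case False
    then have vH: "v \<in> verts H" using v by auto
    let ?X = "{s \<in> verts T. v \<in> B s}"
    let ?R = "{(a,b). {a,b} \<in> {e \<in> ?E. e \<subseteq> {s \<in> ?V. v \<in> ?B s}}}"
    have old: "(a,b) \<in> ?R\<^sup>*" if "a \<in> ?X" "b \<in> ?X" for a b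
    proof -
      have "(a,b) \<in> {(a,b). {a,b} \<in> {e \<in> edges T. e \<subseteq> ?X}}\<^sup>*"
        using cc vH that unfolding connected_graph_def induced_def by auto
      moreover have "{e \<in> edges T. e \<subseteq> ?X} \<subseteq> {e \<in> ?E. e \<subseteq> {s \<in> ?V. v \<in> ?B s}}"
        using t' by auto
      ultimately show ?thesis by (rule rel_mono[rotated])
    qed
    show ?thesis
    proof (cases "v \<in> S")
      case False
      then have "{s \<in> ?V. v \<in> ?B s} = ?X" using t' by auto
      then show ?thesis using old unfolding connected_graph_def induced_def by auto
    next
      case True
      then have vt: "v \<in> B t" using S \<open>v \<noteq> x\<close> by auto
      have Xs: "{s \<in> ?V. v \<in> ?B s} = insert t' ?X" using t' True by auto
      have e1: "(t,t') \<in> ?R\<^sup>*" "(t',t) \<in> ?R\<^sup>*"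
        using vt ht True t' by (auto simp: insert_commute)
      have conn: "(a,b) \<in> ?R\<^sup>*" if "a \<in> insert t' ?X" "b \<in> insert t' ?X" for a b
      proof -
        have tX: "t \<in> ?X" using vt ht by simp
        have "(a,t) \<in> ?R\<^sup>*"
        proof (cases "a = t'")
          case True then show ?thesis using e1(2) by simp
        next
          case False then have "a \<in> ?X" using that(1) by blast
          then show ?thesis using old tX by blast
        qed
        moreover have "(t,b) \<in> ?R\<^sup>*"
        proof (cases "b = t'")
          case True then show ?thesis using e1(1) by simp
        next
          case False then have "b \<in> ?X" using that(2) by blast
          then show ?thesis using old tX by blast
        qed
        ultimately show ?thesis by (rule rtrancl_trans)
      qed
      have ed: "edges (induced (?V,?E) {s \<in> ?V. v \<in> ?B s}) = {e \<in> ?E. e \<subseteq> {s \<in> ?V. v \<in> ?B s}}"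
        unfolding induced_def by (simp only: edges_pair)
      have vv: "verts (induced (?V,?E) {s \<in> ?V. v \<in> ?B s}) \<subseteq> insert t' ?X"
        unfolding induced_def Xs by auto
      show ?thesis unfolding connected_graph_def ed
      proof (intro ballI)
        fix a b assume "a \<in> verts (induced (?V,?E) {s \<in> ?V. v \<in> ?B s})"
          "b \<in> verts (induced (?V,?E) {s \<in> ?V. v \<in> ?B s})"
        then show "(a,b) \<in> ?R\<^sup>*" using conn vv by blast
      qed
    qed
  qed
  show ?thesis unfolding tree_decomp_def
  proof (intro conjI)
    show "is_tree (?V, ?E)" using ext_tree[OF T ht t'] .
    show "\<forall>s\<in>verts (?V,?E). ?B s \<subseteq> verts (insert x (verts H), edges H \<union> E')"
      using bs S ht t' by auto
    show "\<forall>v\<in>verts (insert x (verts H), edges H \<union> E'). \<exists>s\<in>verts (?V,?E). v \<in> ?B s"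
      using cov S t' by force
    show "\<forall>e\<in>edges (insert x (verts H), edges H \<union> E'). \<exists>s\<in>verts (?V,?E). e \<subseteq> ?B s"
      using ce E' t' by force
    show "\<forall>v\<in>verts (insert x (verts H), edges H \<union> E').
           connected_graph (induced (?V,?E) {s \<in> verts (?V,?E). v \<in> ?B s})"
      using sub by simp
  qed
qed

lemma tw_le: "tree_decomp H T B \<Longrightarrow> treewidth H \<le> decomp_width T B"
  unfolding treewidth_def by (rule Least_le) blast

lemma tw_ext:
  assumes gH: "is_graph H" and hx: "x \<notin> verts H"
    and Y: "Y = {} \<or> (\<exists>h\<in>verts H. Y = {h})"
    and E': "\<forall>e\<in>E'. e \<subseteq> insert x Y \<and> card e = 2"
  shows "is_graph (insert x (verts H), edges H \<union> E')
     \<and> treewidth (insert x (verts H), edges H \<union> E') \<le> max (treewidth H) 1"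
proof
  have YH: "Y \<subseteq> verts H" using Y by auto
  show "is_graph (insert x (verts H), edges H \<union> E')"
    using gH E' YH unfolding is_graph_def by auto
  obtain T B where td: "tree_decomp H T B" and w: "decomp_width T B = treewidth H"
    using tw_exists[OF gH] by blast
  have T: "is_tree T" using td unfolding tree_decomp_def by auto
  have fin: "finite (verts T)" and ne: "verts T \<noteq> {}"
    using T unfolding is_tree_def is_graph_def by auto
  obtain t where ht: "t \<in> verts T" and Yt: "Y \<subseteq> B t"
  proof (cases "Y = {}")
    case True then show ?thesis using that ne by blast
  next
    case False
    then obtain h where "h \<in> verts H" "Y = {h}" using Y by blast
    then show ?thesis using that td unfolding tree_decomp_def by blast
  qed
  obtain t' where t': "t' \<notin> verts T" using ex_new_if_finite[OF infinite_UNIV_nat fin] by blast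
  define S where "S = insert x Y"
  have td': "tree_decomp (insert x (verts H), edges H \<union> E')
           (insert t' (verts T), insert {t,t'} (edges T)) (B(t' := S))"
    by (rule ext_decomp[OF td hx ht t']) (use Yt E' in \<open>auto simp: S_def\<close>)
  have cS: "card S \<le> 2" using Y unfolding S_def by (auto simp: card_insert_if)
  have img: "(\<lambda>s. card ((B(t' := S)) s)) ` insert t' (verts T)
        = insert (card S) ((\<lambda>s. card (B s)) ` verts T)"
    using t' by (auto intro!: image_cong)
  have "decomp_width (insert t' (verts T), insert {t,t'} (edges T)) (B(t' := S))
      = max (card S) (Max ((\<lambda>s. card (B s)) ` verts T)) - 1"
    unfolding decomp_width_def verts_pair img using fin ne by (simp add: Max_insert)
  also have "\<dots> \<le> max (treewidth H) 1"
    using w cS unfolding decomp_width_def by linarith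
  finally show "treewidth (insert x (verts H), edges H \<union> E') \<le> max (treewidth H) 1"
    using tw_le[OF td'] by linarith
qed

lemma sp_mono:
  assumes "verts H \<subseteq> verts H'" "edges H \<subseteq> edges H'" "n \<le> n'"
  shows "verts (strong_product H (path_graph n)) \<subseteq> verts (strong_product H' (path_graph n'))"
    and "edges (strong_product H (path_graph n)) \<subseteq> edges (strong_product H' (path_graph n'))"
proof -
  show "verts (strong_product H (path_graph n)) \<subseteq> verts (strong_product H' (path_graph n'))"
    using assms unfolding strong_product_def path_graph_def by auto
  have pe: "edges (path_graph n) \<subseteq> edges (path_graph n')"
    using assms(3) unfolding path_graph_def by auto
  have pv: "verts (path_graph n) \<subseteq> verts (path_graph n')"
    using assms(3) unfolding path_graph_def by auto
  show "edges (strong_product H (path_graph n)) \<subseteq> edges (strong_product H' (path_graph n'))"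
    unfolding strong_product_def edges_pair
  proof
    fix e assume "e \<in> {{(a, b), (c, d)} | a b c d. a \<in> verts H \<and> c \<in> verts H \<and> b \<in> verts (path_graph n) \<and> d \<in> verts (path_graph n)
        \<and> (a, b) \<noteq> (c, d) \<and> (a = c \<or> {a, c} \<in> edges H) \<and> (b = d \<or> {b, d} \<in> edges (path_graph n))}"
    then obtain a b c d where "e = {(a, b), (c, d)}" "a \<in> verts H" "c \<in> verts H" "b \<in> verts (path_graph n)" "d \<in> verts (path_graph n)"
        "(a, b) \<noteq> (c, d)" "(a = c \<or> {a, c} \<in> edges H)" "(b = d \<or> {b, d} \<in> edges (path_graph n))"
      by blast
    then show "e \<in> {{(a, b), (c, d)} | a b c d. a \<in> verts H' \<and> c \<in> verts H' \<and> b \<in> verts (path_graph n') \<and> d \<in> verts (path_graph n')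
        \<and> (a, b) \<noteq> (c, d) \<and> (a = c \<or> {a, c} \<in> edges H') \<and> (b = d \<or> {b, d} \<in> edges (path_graph n'))}"
      using assms pe pv by blast
  qed
qed

lemma sp_edge:
  assumes "a \<in> verts H" "c \<in> verts H" "b \<in> verts P" "d \<in> verts P"
    "(a, b) \<noteq> (c, d)" "a = c \<or> {a, c} \<in> edges H" "b = d \<or> {b, d} \<in> edges P"
  shows "{(a, b), (c, d)} \<in> edges (strong_product H P)"
  unfolding strong_product_def edges_pair using assms by blast

lemma rtw_exists:
  fixes G :: "nat graph"
  assumes g: "is_graph G"
  shows "\<exists>(H :: nat graph) n. is_graph H \<and> treewidth H \<le> row_treewidth G
      \<and> subgraph_iso G (strong_product H (path_graph n))"
proof -
  have "subgraph_iso G (strong_product G (path_graph 1))"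
    unfolding subgraph_iso_def
  proof (intro exI conjI)
    show "inj_on (\<lambda>v. (v, 0::nat)) (verts G)" by (auto simp: inj_on_def)
    show "(\<lambda>v. (v, 0::nat)) ` verts G \<subseteq> verts (strong_product G (path_graph 1))"
      unfolding strong_product_def path_graph_def by auto
    show "\<forall>e\<in>edges G. (\<lambda>v. (v, 0::nat)) ` e \<in> edges (strong_product G (path_graph 1))"
    proof
      fix e assume e: "e \<in> edges G"
      then have "card e = 2" "e \<subseteq> verts G" using g unfolding is_graph_def by auto
      then obtain a c where ac: "e = {a,c}" "a \<noteq> c" by (auto simp: card_2_iff)
      have "{(a, 0::nat), (c, 0)} \<in> edges (strong_product G (path_graph 1))"
        by (rule sp_edge) (use ac e \<open>e \<subseteq> verts G\<close> in \<open>auto simp: path_graph_def\<close>)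
      then show "(\<lambda>v. (v, 0::nat)) ` e \<in> edges (strong_product G (path_graph 1))"
        using ac by simp
    qed
  qed
  then have "\<exists>b. \<exists>(H :: nat graph) n. is_graph H \<and> treewidth H \<le> b
       \<and> subgraph_iso G (strong_product H (path_graph n))" using g by blast
  then show ?thesis unfolding row_treewidth_def by (rule LeastI2_ex) blast
qed

lemma rtw_le:
  "is_graph (H :: nat graph) \<Longrightarrow> treewidth H \<le> b \<Longrightarrow> subgraph_iso G (strong_product H (path_graph n))
    \<Longrightarrow> row_treewidth G \<le> b"
  unfolding row_treewidth_def by (rule Least_le) blast

lemma sp_verts: "verts (strong_product H P) = verts H \<times> verts P"
  unfolding strong_product_def by (simp only: verts_pair)

lemma del_graph: "is_graph G \<Longrightarrow> is_graph (delete_verts G Z)"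
  unfolding is_graph_def delete_verts_def by auto

lemma finish:
  fixes G :: "nat graph" and H H' :: "nat graph"
  assumes g: "is_graph G" and w: "w \<in> verts G"
    and HH: "verts H \<subseteq> verts H'" "edges H \<subseteq> edges H'" and x: "x \<in> verts H'" "x \<notin> verts H"
    and p: "p < n'" and nn: "n \<le> n'"
    and fi: "inj_on f (verts G - {w})"
    and fv: "f ` (verts G - {w}) \<subseteq> verts (strong_product H (path_graph n))"
    and fe: "\<forall>e\<in>edges (delete_verts G {w}). f ` e \<in> edges (strong_product H (path_graph n))"
    and we: "\<forall>e\<in>edges G. w \<in> e \<longrightarrow> (f(w := (x,p))) ` e \<in> edges (strong_product H' (path_graph n'))"
  shows "subgraph_iso G (strong_product H' (path_graph n'))"
  unfolding subgraph_iso_def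
proof (intro exI conjI)
  let ?f = "f(w := (x,p))"
  have VG: "verts G = insert w (verts G - {w})" using w by auto
  have eqo: "?f ` A = f ` A" if "w \<notin> A" for A using that by auto
  have fvH: "fst (f v) \<in> verts H" if "v \<in> verts G - {w}" for v
    using fv that unfolding sp_verts by force
  have ne: "f v \<noteq> (x,p)" if "v \<in> verts G - {w}" for v
    using fvH[OF that] x(2) by (metis fst_conv)
  have "(x,p) \<notin> f ` (verts G - {w})"
  proof
    assume "(x,p) \<in> f ` (verts G - {w})"
    then obtain v where v: "v \<in> verts G - {w}" and fv': "(x,p) = f v" by (rule imageE)
    show False using ne[OF v] fv' by simp
  qed
  show "inj_on ?f (verts G)" unfolding inj_on_def
  proof (intro ballI impI)
    fix a b assume a: "a \<in> verts G" and b: "b \<in> verts G" and eq: "?f a = ?f b"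
    show "a = b"
    proof (cases "a = w"; cases "b = w")
      assume "a = w" "b \<noteq> w" then show ?thesis using eq ne[of b] b by auto
    next
      assume "a \<noteq> w" "b = w" then show ?thesis using eq ne[of a] a by auto
    next
      assume "a \<noteq> w" "b \<noteq> w" then show ?thesis using eq fi a b unfolding inj_on_def by auto
    qed simp
  qed
  have sv: "verts (strong_product H (path_graph n)) \<subseteq> verts (strong_product H' (path_graph n'))"
   and se: "edges (strong_product H (path_graph n)) \<subseteq> edges (strong_product H' (path_graph n'))"
    using sp_mono[OF HH nn] by auto
  have "(x,p) \<in> verts (strong_product H' (path_graph n'))"
    using x p unfolding sp_verts path_graph_def by auto
  then show "?f ` verts G \<subseteq> verts (strong_product H' (path_graph n'))"
  proof -
    have "?f ` verts G = insert (x,p) (f ` (verts G - {w}))" using w by auto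
    then show ?thesis using fv sv \<open>(x,p) \<in> _\<close> by auto
  qed
  show "\<forall>e\<in>edges G. ?f ` e \<in> edges (strong_product H' (path_graph n'))"
  proof
    fix e assume e: "e \<in> edges G"
    show "?f ` e \<in> edges (strong_product H' (path_graph n'))"
    proof (cases "w \<in> e")
      case True then show ?thesis using we e by blast
    next
      case False
      then have "e \<in> edges (delete_verts G {w})" using e unfolding delete_verts_def by auto
      then show ?thesis using fe se eqo[OF False] by auto
    qed
  qed
qed

lemma add_vertex:
  fixes G :: "nat graph"
  assumes g: "is_graph G" and w: "w \<in> verts G" and d: "degree G w \<le> 1"
  shows "row_treewidth G \<le> max (row_treewidth (delete_verts G {w})) 1"
proof -
  let ?G1 = "delete_verts G {w}"
  let ?r = "row_treewidth ?G1"
  have g1: "is_graph ?G1" by (rule del_graph[OF g])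
  have v1: "verts ?G1 = verts G - {w}" by (simp add: delete_verts_def)
  obtain H :: "nat graph" and n where gH: "is_graph H" and twH: "treewidth H \<le> ?r"
    and si: "subgraph_iso ?G1 (strong_product H (path_graph n))"
    using rtw_exists[OF g1] by blast
  obtain f where fi: "inj_on f (verts G - {w})"
    and fv: "f ` (verts G - {w}) \<subseteq> verts (strong_product H (path_graph n))"
    and fe: "\<forall>e\<in>edges ?G1. f ` e \<in> edges (strong_product H (path_graph n))"
    using si unfolding subgraph_iso_def v1 by blast
  have finH: "finite (verts H)" using gH unfolding is_graph_def by auto
  obtain x where x: "x \<notin> verts H" using ex_new_if_finite[OF infinite_UNIV_nat finH] by blast
  have fE: "finite (edges G)" by (rule graph_edges_finite[OF g])
  show ?thesis
  proof (cases "\<exists>e\<in>edges G. w \<in> e")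
    case True
    then obtain e0 where e0: "e0 \<in> edges G" "w \<in> e0" by blast
    have uniq: "e = e0" if "e \<in> edges G" "w \<in> e" for e
    proof -
      have "card {e\<in>edges G. w\<in>e} \<le> Suc 0" using d unfolding degree_def by simp
      then show ?thesis using that e0 fE card_le_Suc0_iff_eq[of "{e\<in>edges G. w\<in>e}"] by auto
    qed
    have c2: "card e0 = 2" and e0G: "e0 \<subseteq> verts G" using g e0 unfolding is_graph_def by auto
    obtain a b where ab: "e0 = {a,b}" "a \<noteq> b" using c2 by (auto simp: card_2_iff)
    obtain v where e0v: "e0 = {w,v}" "v \<noteq> w" using ab e0(2) by (auto simp: insert_commute)
    have vG: "v \<in> verts G - {w}" using e0v e0G by auto
    obtain h p where fvp: "f v = (h,p)" by (cases "f v")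
    have "f v \<in> verts H \<times> verts (path_graph n)" using fv vG unfolding sp_verts by blast
    then have hp: "h \<in> verts H" "p < n" using fvp by (auto simp: path_graph_def)
    have xh: "x \<noteq> h" using x hp by auto
    let ?H' = "(insert x (verts H), edges H \<union> {{x,h}})"
    have tw: "is_graph ?H' \<and> treewidth ?H' \<le> max (treewidth H) 1"
      by (rule tw_ext[OF gH x, of "{h}"]) (use hp xh in auto)
    have we: "\<forall>e\<in>edges G. w \<in> e \<longrightarrow> (f(w := (x,p))) ` e \<in> edges (strong_product ?H' (path_graph n))"
    proof (intro ballI impI)
      fix e assume "e \<in> edges G" "w \<in> e"
      then have ee: "e = {w,v}" using uniq e0v by blast
      have "{(x,p),(h,p)} \<in> edges (strong_product ?H' (path_graph n))"
        by (rule sp_edge) (use hp xh in \<open>auto simp: path_graph_def\<close>)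
      then show "(f(w := (x,p))) ` e \<in> edges (strong_product ?H' (path_graph n))"
        using ee fvp e0v(2) by (simp add: insert_commute)
    qed
    have "subgraph_iso G (strong_product ?H' (path_graph n))"
      by (rule finish[OF g w _ _ _ x hp(2) order_refl fi fv fe we]) auto
    moreover have "treewidth ?H' \<le> max ?r 1" using tw twH by linarith
    ultimately show ?thesis using rtw_le tw by blast
  next
    case False
    let ?H' = "(insert x (verts H), edges H \<union> {})"
    have tw: "is_graph ?H' \<and> treewidth ?H' \<le> max (treewidth H) 1"
      by (rule tw_ext[OF gH x, of "{}"]) auto
    have we: "\<forall>e\<in>edges G. w \<in> e \<longrightarrow> (f(w := (x,0))) ` e \<in> edges (strong_product ?H' (path_graph (Suc n)))"
      using False by blast
    have "subgraph_iso G (strong_product ?H' (path_graph (Suc n)))"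
      by (rule finish[OF g w _ _ _ x _ _ fi fv fe we]) auto
    moreover have "treewidth ?H' \<le> max ?r 1" using tw twH by linarith
    ultimately show ?thesis using rtw_le tw by blast
  qed
qed

lemma del_del: "delete_verts (delete_verts G A) B = delete_verts G (A \<union> B)"
  unfolding delete_verts_def by auto

lemma del_empty: "delete_verts G {} = G"
  unfolding delete_verts_def verts_def edges_def by simp

lemma pendant_bound:
  fixes G :: "nat graph"
  assumes G: "G \<in> pendant_ext C" and k: "\<forall>G'\<in>C. row_treewidth G' \<le> k"
  shows "row_treewidth G \<le> max k 1"
proof -
  obtain Z where g: "is_graph G" and ZG: "Z \<subseteq> verts G" and deg: "\<forall>z\<in>Z. degree G z = 1"
    and dZ: "delete_verts G Z \<in> C"
    using G unfolding pendant_ext_def by blast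
  have finZ: "finite Z" using ZG g unfolding is_graph_def by (auto intro: finite_subset)
  have fE: "finite (edges G)" by (rule graph_edges_finite[OF g])
  have main: "W \<subseteq> Z \<Longrightarrow> row_treewidth (delete_verts G (Z - W)) \<le> max k 1" if "finite W" for W
    using that
  proof (induction W rule: finite_induct)
    case empty
    then show ?case using k dZ by fastforce
  next
    case (insert w W)
    let ?Gb = "delete_verts G (Z - insert w W)"
    have wZ: "w \<in> Z" and WZ: "W \<subseteq> Z" using insert.prems by auto
    have gb: "is_graph ?Gb" by (rule del_graph[OF g])
    have wb: "w \<in> verts ?Gb" using wZ ZG unfolding delete_verts_def by auto
    have "degree ?Gb w \<le> degree G w"
      unfolding degree_def by (rule card_mono) (use fE in \<open>auto simp: delete_verts_def\<close>)
    then have db: "degree ?Gb w \<le> 1" using deg wZ by auto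
    have eq: "(Z - insert w W) \<union> {w} = Z - W" using wZ insert.hyps(2) by auto
    have "row_treewidth ?Gb \<le> max (row_treewidth (delete_verts ?Gb {w})) 1"
      by (rule add_vertex[OF gb wb db])
    also have "delete_verts ?Gb {w} = delete_verts G (Z - W)" unfolding del_del eq ..
    finally show ?case using insert.IH[OF WZ] by linarith
  qed
  have "row_treewidth (delete_verts G (Z - Z)) \<le> max k 1" by (rule main[OF finZ order_refl])
  then show ?thesis by (simp add: del_empty)
qed

theorem mainTheorem3:
  fixes C :: "nat graph set"
  assumes "graph_class C"
  shows "rtw_class (pendant_ext C) \<le> max (rtw_class C) 1"
proof (cases "rtw_class C = \<infinity>")
  case True
  then show ?thesis by simp
next
  case False
  then obtain G0 where G0: "G0 \<in> C" and mx: "\<forall>G'\<in>C. row_treewidth G' \<le> row_treewidth G0"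
    unfolding rtw_class_def by (auto split: if_splits)
  define k where "k = row_treewidth G0"
  have "Max (row_treewidth ` C) = k"
  proof (rule Max_eqI)
    show "finite (row_treewidth ` C)" by (rule finite_subset[of _ "{..k}"]) (use mx k_def in auto)
  qed (use mx G0 k_def in auto)
  then have rC: "rtw_class C = enat k" unfolding rtw_class_def using G0 mx by auto
  let ?D = "pendant_ext C"
  have gC: "\<forall>G\<in>C. is_graph G" using assms unfolding graph_class_def by auto
  have CD: "C \<subseteq> ?D"
  proof
    fix G assume "G \<in> C"
    then show "G \<in> ?D" using gC unfolding pendant_ext_def by (auto simp: del_empty intro!: exI[of _ "{}"])
  qed
  have bD: "\<forall>G\<in>?D. row_treewidth G \<le> max k 1" using pendant_bound mx k_def by blast
  have finD: "finite (row_treewidth ` ?D)" by (rule finite_subset[of _ "{..max k 1}"]) (use bD in auto)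
  have neD: "row_treewidth ` ?D \<noteq> {}" using CD G0 by auto
  obtain G1 where G1: "G1 \<in> ?D" "row_treewidth G1 = Max (row_treewidth ` ?D)"
    using Max_in[OF finD neD] by auto
  have "\<forall>G'\<in>?D. row_treewidth G' \<le> row_treewidth G1" using G1 finD by auto
  then have "\<exists>G\<in>?D. \<forall>G'\<in>?D. row_treewidth G' \<le> row_treewidth G" using G1(1) by blast
  then have rD: "rtw_class ?D = enat (Max (row_treewidth ` ?D))" unfolding rtw_class_def by (rule if_P)
  have "Max (row_treewidth ` ?D) \<le> max k 1" using G1 bD by metis
  then show ?thesis unfolding rD rC by (simp add: one_enat_def max_def split: if_splits)
qed

end
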